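(* Let $h>0$, $\alpha>2$, $\beta\ge0$, $c>0$, and let $V$ be as in the setting. Let $\mathcal{N}=(\mathcal{N}_{jk})_{j,k\in\mathbb{Z}}$ be a unitary operator on $l^2(\mathbb{Z})$ such that for all $j,k\in\mathbb{Z}$ $$\Big|\mathcal{N}_{jk}-\delta_{jk}e^{\frac{2\pi}{ih}k^2}-\delta_{-j,k}\frac{e^{\frac{2\pi}{ih}k^2}}{ih}\int_0^{2\pi}v_{-2k}(\tau)\,d\tau\Big|\le\frac{c\,e^{-\beta|j-k|}}{\langle j\rangle\langle k\rangle\langle j-k\rangle^{\alpha-1}}.$$ For $N\in\mathbb{N}$ let $w_{jk}=\mathcal{N}_{jk}$ for $-N\le j,k\le N$, and $\varepsilon_{jk}=\frac{c^2c_{\alpha-1}e^{-\beta|j-k|}}{\langle j\rangle\langle k\rangle(N+1)^2\langle j-k\rangle^{\alpha-1}}$, $\sigma_k=4\sum_{|l|\le|k|}\varepsilon_{lk}$. Then for every sufficiently large $N$ there exists a unitary $(2N+1)\times(2N+1)$ matrix $U=(u_{jk})_{-N\le j,k\le N}$ such that for all $-N\le j,k\le N$ $$|u_{jk}-w_{jk}|\le\sigma_k|w_{jk}|+\sum_{-|k|\le l<|k|,\ l\ne k}4\varepsilon_{lk}|w_{jl}|.$$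
   Context: $V(x,t)=\sum_{k\in\mathbb{Z}}v_k(t)e^{ikx}$ is real-valued and $2\pi$-periodic in $t$ with $v_0\equiv0$; $\langle k\rangle=|k|+1$; $\delta$ is the Kronecker delta; $e^{\frac{t}{ih}k^2}=e^{-itk^2/h}$. For $\nu>1$, $c_\nu$ denotes a constant depending only on $\nu$ such that for all $\beta\ge0$ and $s,m\in\mathbb{Z}$: $\sum_{k\in\mathbb{Z}}\frac{e^{-\beta|s-k|-\beta|k-m|}}{\langle s-k\rangle^\nu\langle k-m\rangle^\nu}\le\frac{c_\nu e^{-\beta|s-m|}}{\langle s-m\rangle^\nu}$. *)

theory Defs
  imports "HOL-Analysis.Analysis"
begin

definition angle :: "int \<Rightarrow> real" where
  "angle k = real_of_int \<bar>k\<bar> + 1"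

text \<open>Standing assumptions on the potential V, given through its Fourier
  coefficients v k t (V(x,t) = sum_k v_k(t) e^(ikx)): V real-valued
  (conjugate symmetry of the coefficients), 2pi-periodic in t, v_0 = 0.\<close>
definition potential_setting :: "(int \<Rightarrow> real \<Rightarrow> complex) \<Rightarrow> bool" where
  "potential_setting v \<longleftrightarrow>
     (\<forall>t. v 0 t = 0) \<and>
     (\<forall>k t. v (-k) t = cnj (v k t)) \<and>
     (\<forall>k t. v k (t + 2*pi) = v k t)"

text \<open>C is an admissible constant c_nu in the convolution inequality.\<close>
definition conv_const :: "real \<Rightarrow> real \<Rightarrow> bool" where
  "conv_const \<nu> C \<longleftrightarrow>
     (\<forall>\<beta>\<ge>0. \<forall>s m::int.
        (\<Sum>\<^sub>\<infinity>k::int. exp (-\<beta> * \<bar>s-k\<bar> - \<beta> * \<bar>k-m\<bar>) /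
             (angle (s-k) powr \<nu> * angle (k-m) powr \<nu>))
        \<le> C * exp (-\<beta> * \<bar>s-m\<bar>) / angle (s-m) powr \<nu>)"

definition unitary_l2Z :: "(int \<Rightarrow> int \<Rightarrow> complex) \<Rightarrow> bool" where
  "unitary_l2Z M \<longleftrightarrow>
     (\<forall>k l. ((\<lambda>j. cnj (M j l) * M j k) has_sum (if l = k then 1 else 0)) UNIV) \<and>
     (\<forall>j l. ((\<lambda>k. M j k * cnj (M l k)) has_sum (if j = l then 1 else 0)) UNIV)"

definition unitary_on :: "int set \<Rightarrow> (int \<Rightarrow> int \<Rightarrow> complex) \<Rightarrow> bool" where
  "unitary_on I U \<longleftrightarrow>
     (\<forall>k\<in>I. \<forall>l\<in>I. (\<Sum>j\<in>I. cnj (U j l) * U j k) = (if l = k then 1 else 0)) \<and>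
     (\<forall>j\<in>I. \<forall>l\<in>I. (\<Sum>k\<in>I. U j k * cnj (U l k)) = (if j = l then 1 else 0))"

end

theory Submission
  imports Defs "Jordan_Normal_Form.Determinant"
begin


lemma angle_ge1: "angle k \<ge> 1" by (simp add: angle_def)
lemma angle_pos: "angle k > 0" by (simp add: angle_def)

lemma kernel_summable0:
  assumes "a > 1"
  shows "(\<lambda>j::int. 1 / angle j powr a) summable_on UNIV"
proof -
  have s: "summable (\<lambda>n::nat. real (Suc n) powr (-a))"
    using summable_real_powr_iff[of "-a"] assms summable_Suc_iff[of "\<lambda>n. real n powr (-a)"] by simp
  have s1: "(\<lambda>n::nat. real (Suc n) powr (-a)) summable_on UNIV"
    using s by (subst summable_on_UNIV_nonneg_real_iff) auto
  have e1: "(\<lambda>n::nat. 1 / angle (int n) powr a) = (\<lambda>n. real (Suc n) powr (-a))"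
    by (auto simp: angle_def powr_minus divide_inverse add.commute)
  have A: "(\<lambda>j::int. 1 / angle j powr a) summable_on (range int)"
    using s1 by (subst summable_on_reindex) (auto simp: o_def e1)
  have s2: "(\<lambda>n::nat. 1 / angle (- int n - 1) powr a) summable_on UNIV"
  proof (rule summable_on_comparison_test[OF s1])
    fix n :: nat
    have "angle (- int n - 1) \<ge> real (Suc n)" by (simp add: angle_def)
    hence "1 / angle (- int n - 1) powr a \<le> 1 / real (Suc n) powr a"
      using assms by (intro divide_left_mono powr_mono2) auto
    thus "1 / angle (- int n - 1) powr a \<le> real (Suc n) powr (-a)"
      by (simp add: powr_minus divide_inverse)
  qed (simp)
  have inj2: "inj (\<lambda>n::nat. - int n - 1)" by (auto simp: inj_def)
  have B: "(\<lambda>j::int. 1 / angle j powr a) summable_on (range (\<lambda>n::nat. - int n - 1))"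
    using s2 by (subst summable_on_reindex[OF inj2]) (auto simp: o_def)
  have U: "(UNIV::int set) = range int \<union> range (\<lambda>n::nat. - int n - 1)"
  proof -
    { fix j :: int have "j \<in> range int \<union> range (\<lambda>n::nat. - int n - 1)"
      proof (cases "j \<ge> 0")
        case True thus ?thesis by (auto intro: image_eqI[of j int "nat j"])
      next
        case False thus ?thesis by (auto intro!: image_eqI[of j _ "nat (-j-1)"])
      qed }
    thus ?thesis by blast
  qed
  show ?thesis unfolding U
    by (rule summable_on_Un_disjoint[OF A B]) auto
qed

lemma kernel_summable:
  assumes "a > 1"
  shows "(\<lambda>j::int. 1 / angle (j - k) powr a) summable_on UNIV"
proof -
  have b: "bij_betw (\<lambda>j. j - k) UNIV (UNIV::int set)"
    by (rule bij_betwI[where g="\<lambda>j. j + k"]) auto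
  show ?thesis using summable_on_reindex_bij_betw[OF b, of "\<lambda>j. 1 / angle j powr a"] kernel_summable0[OF assms]
    by simp
qed

lemma conv_summable:
  fixes a \<beta> :: real and s m :: int
  assumes "a > 1" "\<beta> \<ge> 0"
  shows "(\<lambda>j::int. exp (-\<beta> * \<bar>s-j\<bar> - \<beta> * \<bar>j-m\<bar>) / (angle (s-j) powr a * angle (j-m) powr a)) summable_on UNIV"
proof (rule summable_on_comparison_test[OF kernel_summable[OF assms(1), of m]])
  fix j :: int
  have e: "exp (-\<beta> * \<bar>s-j\<bar> - \<beta> * \<bar>j-m\<bar>) \<le> 1" using assms by (simp add: add_nonneg_nonneg) (smt (verit) mult_nonneg_nonneg abs_ge_zero)
  have p1: "angle (s-j) powr a \<ge> 1" using angle_ge1 assms by (simp add: ge_one_powr_ge_zero)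
  have p2: "angle (j-m) powr a > 0" using angle_pos[of "j-m"] by simp
  have "exp (-\<beta> * \<bar>s-j\<bar> - \<beta> * \<bar>j-m\<bar>) / (angle (s-j) powr a * angle (j-m) powr a)
      \<le> 1 / (1 * angle (j-m) powr a)"
    using e p1 p2 by (intro frac_le mult_right_mono) auto
  thus "exp (-\<beta> * \<bar>s-j\<bar> - \<beta> * \<bar>j-m\<bar>) / (angle (s-j) powr a * angle (j-m) powr a) \<le> 1 / angle (j-m) powr a" by simp
  show "0 \<le> exp (-\<beta> * \<bar>s-j\<bar> - \<beta> * \<bar>j-m\<bar>) / (angle (s-j) powr a * angle (j-m) powr a)"
    using angle_pos by simp
qed

lemma cst_pos:
  assumes "a > 1" "conv_const a C"
  shows "C \<ge> 1"
proof -
  let ?f = "\<lambda>j::int. exp (-0 * \<bar>0-j\<bar> - 0 * \<bar>j-0\<bar>) / (angle (0-j) powr a * angle (j-0) powr a)"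
  have "?f summable_on UNIV" using conv_summable[OF assms(1), of 0 0 0] by simp
  have "infsum ?f {0} \<le> infsum ?f UNIV"
    by (rule infsum_mono_neutral) (use \<open>?f summable_on UNIV\<close> angle_pos in auto)
  moreover have "infsum ?f {0} = 1" by (simp add: angle_def)
  moreover have "infsum ?f UNIV \<le> C" using assms(2) unfolding conv_const_def
    by (auto dest!: spec[of _ 0] simp: angle_def)
  ultimately show ?thesis by simp
qed



definition Qf :: "int set \<Rightarrow> (int\<Rightarrow>int\<Rightarrow>complex) \<Rightarrow> (int\<Rightarrow>complex) \<Rightarrow> (int\<Rightarrow>complex) \<Rightarrow> complex" where
  "Qf I G x y = (\<Sum>m\<in>I. \<Sum>m'\<in>I. cnj (x m) * G m m' * y m')"

lemma Qf_herm:
  assumes "\<forall>m\<in>I. \<forall>m'\<in>I. G m m' = cnj (G m' m)"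
  shows "Qf I G x y = cnj (Qf I G y x)"
proof -
  have "(\<Sum>m\<in>I. \<Sum>m'\<in>I. cnj (x m) * G m m' * y m') = (\<Sum>m'\<in>I. \<Sum>m\<in>I. cnj (x m) * G m m' * y m')"
    by (rule sum.swap)
  also have "\<dots> = (\<Sum>m'\<in>I. \<Sum>m\<in>I. cnj (cnj (y m') * G m' m * x m))"
  proof (rule sum.cong[OF refl], rule sum.cong[OF refl])
    fix m m' assume "m' \<in> I" "m \<in> I"
    hence g: "G m m' = cnj (G m' m)" using assms by blast
    show "cnj (x m) * G m m' * y m' = cnj (cnj (y m') * G m' m * x m)" by (simp add: g)
  qed
  also have "\<dots> = cnj (\<Sum>m'\<in>I. \<Sum>m\<in>I. cnj (y m') * G m' m * x m)"
    by (simp only: cnj_sum)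
  finally show ?thesis unfolding Qf_def .
qed

lemma Qf_comb_right:
  assumes "finite B"
  shows "Qf I G x (\<lambda>m. y m - (\<Sum>l\<in>B. f l * z l m)) = Qf I G x y - (\<Sum>l\<in>B. f l * Qf I G x (z l))"
proof -
  have "Qf I G x (\<lambda>m. y m - (\<Sum>l\<in>B. f l * z l m))
     = (\<Sum>m\<in>I. \<Sum>m'\<in>I. cnj (x m) * G m m' * y m' - (\<Sum>l\<in>B. f l * (cnj (x m) * G m m' * z l m')))"
    unfolding Qf_def by (simp add: right_diff_distrib sum_distrib_left mult.commute mult.left_commute)
  also have "\<dots> = Qf I G x y - (\<Sum>m\<in>I. \<Sum>m'\<in>I. \<Sum>l\<in>B. f l * (cnj (x m) * G m m' * z l m'))"
    unfolding Qf_def by (simp add: sum_subtractf)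
  also have "(\<Sum>m\<in>I. \<Sum>m'\<in>I. \<Sum>l\<in>B. f l * (cnj (x m) * G m m' * z l m')) = (\<Sum>l\<in>B. f l * Qf I G x (z l))"
  proof -
    have "(\<Sum>m\<in>I. \<Sum>m'\<in>I. \<Sum>l\<in>B. f l * (cnj (x m) * G m m' * z l m'))
       = (\<Sum>m\<in>I. \<Sum>l\<in>B. \<Sum>m'\<in>I. f l * (cnj (x m) * G m m' * z l m'))"
      by (rule sum.cong[OF refl], rule sum.swap)
    also have "\<dots> = (\<Sum>l\<in>B. \<Sum>m\<in>I. \<Sum>m'\<in>I. f l * (cnj (x m) * G m m' * z l m'))"
      by (rule sum.swap)
    also have "\<dots> = (\<Sum>l\<in>B. f l * Qf I G x (z l))"
      unfolding Qf_def by (simp add: sum_distrib_left)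
    finally show ?thesis .
  qed
  finally show ?thesis .
qed

lemma Qf_comb_left:
  assumes "finite B" "\<forall>m\<in>I. \<forall>m'\<in>I. G m m' = cnj (G m' m)"
  shows "Qf I G (\<lambda>m. y m - (\<Sum>l\<in>B. f l * z l m)) x = Qf I G y x - (\<Sum>l\<in>B. cnj (f l) * Qf I G (z l) x)"
proof -
  have "Qf I G (\<lambda>m. y m - (\<Sum>l\<in>B. f l * z l m)) x = cnj (Qf I G x (\<lambda>m. y m - (\<Sum>l\<in>B. f l * z l m)))"
    by (rule Qf_herm[OF assms(2)])
  also have "\<dots> = cnj (Qf I G x y) - (\<Sum>l\<in>B. cnj (f l) * cnj (Qf I G x (z l)))"
    by (simp add: Qf_comb_right[OF assms(1)])
  also have "\<dots> = Qf I G y x - (\<Sum>l\<in>B. cnj (f l) * Qf I G (z l) x)"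
  proof -
    have e1: "cnj (Qf I G x y) = Qf I G y x" using Qf_herm[OF assms(2), of y x] by simp
    have e2: "\<And>l. cnj (Qf I G x (z l)) = Qf I G (z l) x" using Qf_herm[OF assms(2), of "z _" x] by simp
    show ?thesis by (simp add: e1 e2)
  qed
  finally show ?thesis .
qed

lemma Qf_div_right: "Qf I G x (\<lambda>m. y m / s) = Qf I G x y / s"
  unfolding Qf_def by (simp only: times_divide_eq_right sum_divide_distrib[symmetric])

lemma Qf_div_left: "Qf I G (\<lambda>m. y m / s) x = Qf I G y x / cnj s"
  unfolding Qf_def by (simp only: complex_cnj_divide times_divide_eq_left sum_divide_distrib[symmetric])

lemma inv_sqrt_bound:
  fixes x :: real
  assumes "\<bar>x - 1\<bar> \<le> 1/2"
  shows "\<bar>1 / sqrt x - 1\<bar> \<le> \<bar>x - 1\<bar>"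
proof -
  have x: "x \<ge> 1/2" using assms unfolding abs_le_iff by linarith
  define s where "s = sqrt x"
  have s0: "s > 0" using x by (simp add: s_def)
  have ss: "s * s = x" using x by (simp add: s_def)
  have s2: "s \<ge> 7/10"
  proof (rule ccontr)
    assume "\<not> s \<ge> 7/10"
    hence "s * s < 7/10 * (7/10)" using s0 by (intro mult_strict_mono) auto
    thus False using ss x by simp
  qed
  have d1: "s * (1 + s) \<ge> 1"
  proof -
    have "7/10*(1+7/10) \<le> s * (1 + s)" using s2 by (intro mult_mono) auto
    thus ?thesis by simp
  qed
  have d0: "s * (1 + s) > 0" using s0 by simp
  have h: "(1 / s - 1) * (s * (1 + s)) = 1 - x"
  proof -
    have "(1 / s - 1) * (s * (1 + s)) = (1 - s) * (1 + s)" using s0 by (simp add: field_simps)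
    also have "\<dots> = 1 - s * s" by (simp add: algebra_simps)
    finally show ?thesis using ss by simp
  qed
  hence "\<bar>1 / s - 1\<bar> * (s * (1 + s)) = \<bar>1 - x\<bar>" using d0 by (metis abs_mult abs_of_pos)
  hence "\<bar>1 / s - 1\<bar> * (s * (1 + s)) = \<bar>x - 1\<bar>" by (simp add: abs_minus_commute)
  moreover have "\<bar>1 / s - 1\<bar> * 1 \<le> \<bar>1 / s - 1\<bar> * (s * (1 + s))"
    using d1 by (intro mult_left_mono) auto
  ultimately show ?thesis by (simp add: s_def)
qed




lemma delta_sum1:
  fixes C :: real
  assumes "finite I" "l \<in> I"
  shows "(\<Sum>m\<in>I. ((if m = l then C else 0) + D m) * E m) = C * E l + (\<Sum>m\<in>I. D m * E m)"
proof -
  have "(\<Sum>m\<in>I. ((if m = l then C else 0) + D m) * E m) = (\<Sum>m\<in>I. (if m = l then C * E l else 0)) + (\<Sum>m\<in>I. D m * E m)"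
    unfolding sum.distrib[symmetric] by (rule sum.cong[OF refl]) (auto simp: distrib_right)
  thus ?thesis using assms by simp
qed

lemma delta_sum2:
  fixes C :: real
  assumes "finite I" "m \<in> I"
  shows "(\<Sum>l\<in>I. F l * ((if m = l then C else 0) + D l)) = F m * C + (\<Sum>l\<in>I. F l * D l)"
proof -
  have "(\<Sum>l\<in>I. F l * ((if m = l then C else 0) + D l)) = (\<Sum>l\<in>I. (if m = l then F m * C else 0)) + (\<Sum>l\<in>I. F l * D l)"
    unfolding sum.distrib[symmetric] by (rule sum.cong[OF refl]) (auto simp: distrib_left)
  thus ?thesis using assms by simp
qed

lemma gram_schmidt:
  fixes I :: "int set" and r :: "int \<Rightarrow> nat" and G :: "int\<Rightarrow>int\<Rightarrow>complex"
    and \<epsilon> :: "int\<Rightarrow>int\<Rightarrow>real" and \<delta> \<eta> :: real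
  assumes fin: "finite I" and inj: "inj_on r I"
    and herm: "\<forall>m\<in>I. \<forall>m'\<in>I. G m m' = cnj (G m' m)"
    and Gb: "\<forall>l\<in>I. \<forall>k\<in>I. cmod (G l k - (if l = k then 1 else 0)) \<le> \<epsilon> l k"
    and epos: "\<forall>l k. \<epsilon> l k \<ge> 0" and esym: "\<forall>l k. \<epsilon> l k = \<epsilon> k l"
    and conv: "\<forall>l\<in>I. \<forall>k\<in>I. (\<Sum>m\<in>I. \<epsilon> m l * \<epsilon> m k) \<le> \<delta> * \<epsilon> l k"
    and diag: "\<forall>k\<in>I. \<epsilon> k k \<le> \<eta>"
    and d0: "0 \<le> \<delta>" "\<delta> \<le> 1/10" "0 \<le> \<eta>" "\<eta> \<le> 1/10"
  shows "\<exists>T. \<forall>k\<in>I. (\<forall>m\<in>I. T m k \<noteq> 0 \<longrightarrow> m = k \<or> r m < r k) \<and> cmod (T k k - 1) \<le> 2 * \<epsilon> k k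
     \<and> (\<forall>m\<in>I. r m < r k \<longrightarrow> cmod (T m k) \<le> 4 * \<epsilon> m k)
     \<and> (\<forall>l\<in>I. Qf I G (\<lambda>m. T m l) (\<lambda>m. T m k) = (if l = k then 1 else 0))"
proof -
  define good where "good T k \<longleftrightarrow> (\<forall>m\<in>I. T m k \<noteq> 0 \<longrightarrow> m = k \<or> r m < r k) \<and> cmod (T k k - 1) \<le> 2 * \<epsilon> k k
     \<and> (\<forall>m\<in>I. r m < r k \<longrightarrow> cmod (T m k) \<le> 4 * \<epsilon> m k)" for T :: "int\<Rightarrow>int\<Rightarrow>complex" and k
  define P where "P n \<longleftrightarrow> (\<exists>T. (\<forall>k\<in>I. r k < n \<longrightarrow> good T k) \<and>
      (\<forall>k\<in>I. \<forall>l\<in>I. r k < n \<longrightarrow> r l < n \<longrightarrow> Qf I G (\<lambda>m. T m l) (\<lambda>m. T m k) = (if l = k then 1 else 0)))" for n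
  have "P n" for n
  proof (induction n)
    case 0
    show ?case unfolding P_def by auto
  next
    case (Suc n)
    then obtain T where T1: "\<forall>k\<in>I. r k < n \<longrightarrow> good T k"
      and T2: "\<forall>k\<in>I. \<forall>l\<in>I. r k < n \<longrightarrow> r l < n \<longrightarrow> Qf I G (\<lambda>m. T m l) (\<lambda>m. T m k) = (if l = k then 1 else 0)"
      unfolding P_def by blast
    show ?case
    proof (cases "\<exists>k\<in>I. r k = n")
      case False
      hence eqv: "\<forall>j\<in>I. r j < Suc n \<longleftrightarrow> r j < n" using less_Suc_eq by blast
      show ?thesis unfolding P_def
        by (rule exI[of _ T]) (use T1 T2 eqv in blast)
    next
      case True
      then obtain k where kI: "k \<in> I" and rk: "r k = n" by blast
      define B where "B = {l\<in>I. r l < n}"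
      have finB: "finite B" using fin by (simp add: B_def)
      have BI: "B \<subseteq> I" by (auto simp: B_def)
      have kB: "k \<notin> B" using rk by (simp add: B_def)
      have rSuc: "\<forall>j\<in>I. r j < Suc n \<longleftrightarrow> (j \<in> B \<or> j = k)"
        using inj kI rk by (auto simp: B_def inj_on_def less_Suc_eq)
      define e where "e = (\<lambda>m. if m = k then 1 else (0::complex))"
      define a where "a l = Qf I G (\<lambda>m. T m l) e" for l
      define c where "c = (\<lambda>m. e m - (\<Sum>l\<in>B. a l * T m l))"
      define q where "q = Re (Qf I G c c)"
      define K where "K = 1 + 2*\<eta> + 4*\<delta>"
      have K1: "1 \<le> K" and K2: "K \<le> 8/5" using d0 by (auto simp: K_def)
      have goodB: "\<forall>l\<in>B. good T l" using T1 by (auto simp: B_def)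
      have orthB: "\<forall>l\<in>B. \<forall>l'\<in>B. Qf I G (\<lambda>m. T m l) (\<lambda>m. T m l') = (if l = l' then 1 else 0)"
        using T2 by (auto simp: B_def)
      have suppB: "\<forall>l\<in>B. \<forall>m\<in>I. T m l \<noteq> 0 \<longrightarrow> m = l \<or> r m < r l"
        using goodB by (auto simp: good_def)
      have colb: "\<forall>l\<in>B. \<forall>m\<in>I. cmod (T m l) \<le> (if m = l then 1 + 2*\<eta> else 0) + 4 * \<epsilon> m l"
      proof (intro ballI)
        fix l m assume l: "l \<in> B" and m: "m \<in> I"
        have g: "good T l" using goodB l by blast
        show "cmod (T m l) \<le> (if m = l then 1 + 2*\<eta> else 0) + 4 * \<epsilon> m l"
        proof (cases "m = l")
          case True
          have "cmod (T l l) \<le> cmod (T l l - 1) + cmod 1"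
            by (metis norm_triangle_ineq diff_add_cancel)
          also have "\<dots> \<le> 2 * \<epsilon> l l + 1" using g by (simp add: good_def)
          also have "\<dots> \<le> 1 + 2*\<eta> + 4 * \<epsilon> l l" proof -
            have "\<epsilon> l l \<le> \<eta>" "0 \<le> \<epsilon> l l" using diag l BI epos by auto
            thus ?thesis by linarith
          qed
          finally show ?thesis using True by simp
        next
          case False
          show ?thesis
          proof (cases "r m < r l")
            case True thus ?thesis using g m False by (simp add: good_def)
          next
            case F2: False
            hence "T m l = 0" using suppB l m False by blast
            thus ?thesis using False epos by simp
          qed
        qed
      qed
      have delta_sum: "\<And>f::int\<Rightarrow>complex. (\<Sum>m'\<in>I. f m' * e m') = f k"
        using kI fin by (simp add: e_def if_distrib cong: if_cong)
      have a_expr: "a l = (\<Sum>m\<in>I. cnj (T m l) * G m k)" for l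
        unfolding a_def Qf_def using delta_sum by simp
      have TkB: "\<forall>l\<in>B. T k l = 0"
      proof
        fix l assume l: "l \<in> B"
        have "r l < r k" using l rk by (simp add: B_def)
        thus "T k l = 0" using suppB l kI kB by fastforce
      qed
      have a_bound: "\<forall>l\<in>B. cmod (a l) \<le> K * \<epsilon> l k"
      proof
        fix l assume l: "l \<in> B"
        have lI: "l \<in> I" using l BI by blast
        have "a l = (\<Sum>m\<in>I. cnj (T m l) * (G m k - (if m = k then 1 else 0)))"
          unfolding a_expr by (rule sum.cong) (use TkB l in auto)
        hence "cmod (a l) \<le> (\<Sum>m\<in>I. cmod (cnj (T m l) * (G m k - (if m = k then 1 else 0))))"
          by (simp only: norm_sum)
        also have "\<dots> \<le> (\<Sum>m\<in>I. cmod (T m l) * \<epsilon> m k)"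
        proof (rule sum_mono)
          fix m assume m: "m \<in> I"
          have "cmod (G m k - (if m = k then 1 else 0)) \<le> \<epsilon> m k" using Gb m kI by blast
          thus "cmod (cnj (T m l) * (G m k - (if m = k then 1 else 0))) \<le> cmod (T m l) * \<epsilon> m k"
            by (simp add: norm_mult mult_left_mono)
        qed
        also have "\<dots> \<le> (\<Sum>m\<in>I. ((if m = l then 1 + 2*\<eta> else 0) + 4 * \<epsilon> m l) * \<epsilon> m k)"
          by (rule sum_mono, rule mult_right_mono) (use colb l epos in auto)
        also have "\<dots> = (1 + 2*\<eta>) * \<epsilon> l k + 4 * (\<Sum>m\<in>I. \<epsilon> m l * \<epsilon> m k)"
          using lI fin by (simp add: delta_sum1 sum_distrib_left mult.assoc)
        also have "\<dots> \<le> (1 + 2*\<eta>) * \<epsilon> l k + 4 * (\<delta> * \<epsilon> l k)"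
          using conv lI kI by simp
        finally show "cmod (a l) \<le> K * \<epsilon> l k" by (simp add: K_def algebra_simps)
      qed
      have ck: "c k = 1" by (simp add: c_def e_def TkB)
      have c_supp: "\<forall>m\<in>I. c m \<noteq> 0 \<longrightarrow> m = k \<or> r m < n"
      proof (intro ballI impI)
        fix m assume m: "m \<in> I" and cm: "c m \<noteq> 0"
        show "m = k \<or> r m < n"
        proof (rule ccontr)
          assume nn: "\<not> (m = k \<or> r m < n)"
          have "\<forall>l\<in>B. T m l = 0"
          proof
            fix l assume l: "l \<in> B"
            have "r l < n" using l by (simp add: B_def)
            thus "T m l = 0" using suppB l m nn by fastforce
          qed
          hence "c m = 0" using nn by (simp add: c_def e_def)
          thus False using cm by simp
        qed
      qed
      have orth_c: "\<forall>l\<in>B. Qf I G (\<lambda>m. T m l) c = 0"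
      proof
        fix l assume l: "l \<in> B"
        have "Qf I G (\<lambda>m. T m l) c = Qf I G (\<lambda>m. T m l) e - (\<Sum>l'\<in>B. a l' * Qf I G (\<lambda>m. T m l) (\<lambda>m. T m l'))"
          unfolding c_def by (rule Qf_comb_right[OF finB, of I G "\<lambda>m. T m l" e a "\<lambda>l m. T m l", simplified])
        also have "(\<Sum>l'\<in>B. a l' * Qf I G (\<lambda>m. T m l) (\<lambda>m. T m l')) = (\<Sum>l'\<in>B. a l' * (if l = l' then 1 else 0))"
          by (rule sum.cong) (use orthB l in auto)
        also have "\<dots> = a l" using l finB by (simp add: if_distrib cong: if_cong)
        finally show "Qf I G (\<lambda>m. T m l) c = 0" by (simp add: a_def)
      qed
      have Qee: "Qf I G e e = G k k"
      proof -
        have "Qf I G e e = (\<Sum>m\<in>I. cnj (e m) * G m k)" unfolding Qf_def using delta_sum by simp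
        also have "\<dots> = (\<Sum>m\<in>I. if m = k then G k k else 0)"
          by (rule sum.cong[OF refl]) (simp add: e_def)
        also have "\<dots> = G k k" using kI fin by simp
        finally show ?thesis .
      qed
      have Qcc: "Qf I G c c = G k k - (\<Sum>l\<in>B. a l * cnj (a l))"
      proof -
        have "Qf I G c c = Qf I G e c - (\<Sum>l\<in>B. cnj (a l) * Qf I G (\<lambda>m. T m l) c)"
          unfolding c_def by (rule Qf_comb_left[OF finB herm, of e a "\<lambda>l m. T m l", simplified])
        also have "(\<Sum>l\<in>B. cnj (a l) * Qf I G (\<lambda>m. T m l) c) = 0" using orth_c by simp
        also have "Qf I G e c = Qf I G e e - (\<Sum>l\<in>B. a l * Qf I G e (\<lambda>m. T m l))"
          unfolding c_def by (rule Qf_comb_right[OF finB, of I G e e a "\<lambda>l m. T m l", simplified])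
        also have "(\<Sum>l\<in>B. a l * Qf I G e (\<lambda>m. T m l)) = (\<Sum>l\<in>B. a l * cnj (a l))"
          by (rule sum.cong) (auto simp: a_def intro: Qf_herm[OF herm])
        finally show ?thesis using Qee by simp
      qed
      have GkkR: "Im (G k k) = 0"
      proof -
        have "G k k = cnj (G k k)" using herm kI by blast
        hence "Im (G k k) = Im (cnj (G k k))" by simp
        thus ?thesis by simp
      qed
      define S where "S = (\<Sum>l\<in>B. (cmod (a l))^2)"
      have aa: "a l * cnj (a l) = complex_of_real ((cmod (a l))^2)" for l
        by (rule complex_norm_square[symmetric])
      have Qcc2: "Qf I G c c = complex_of_real (Re (G k k) - S)"
        unfolding Qcc S_def aa using GkkR by (simp add: complex_eq_iff)
      have qS: "q = Re (G k k) - S" unfolding q_def Qcc2 by simp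
      have Qcq: "Qf I G c c = complex_of_real q" using Qcc2 qS by simp
      have S0: "S \<ge> 0" unfolding S_def by (simp add: sum_nonneg)
      have SK: "S \<le> K^2 * \<delta> * \<epsilon> k k"
      proof -
        have "S \<le> (\<Sum>l\<in>B. (K * \<epsilon> l k)^2)"
          unfolding S_def by (rule sum_mono, rule power_mono) (use a_bound in auto)
        also have "\<dots> \<le> (\<Sum>l\<in>I. (K * \<epsilon> l k)^2)"
          by (rule sum_mono2[OF fin BI]) auto
        also have "\<dots> = K^2 * (\<Sum>l\<in>I. \<epsilon> l k * \<epsilon> l k)"
          by (simp add: sum_distrib_left power2_eq_square algebra_simps)
        also have "\<dots> \<le> K^2 * (\<delta> * \<epsilon> k k)"
          using conv kI by (intro mult_left_mono) auto
        finally show ?thesis by simp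
      qed
      have Re1: "\<bar>Re (G k k) - 1\<bar> \<le> \<epsilon> k k"
        using Gb kI abs_Re_le_cmod[of "G k k - 1"] by force
      have K2d: "K^2 * \<delta> \<le> 1/2"
      proof -
        have "K^2 \<le> (8/5)^2" using K1 K2 by (intro power_mono) auto
        hence "K^2 * \<delta> \<le> (8/5)^2 * (1/10)" using d0 by (intro mult_mono) auto
        also have "(8/5)^2 * (1/10) \<le> (1/2::real)" by (simp add: power2_eq_square)
        finally show ?thesis .
      qed
      have ekk: "0 \<le> \<epsilon> k k" "\<epsilon> k k \<le> 1/10" using epos diag kI d0 by auto
      have q1: "\<bar>q - 1\<bar> \<le> 2 * \<epsilon> k k"
      proof -
        have "K^2 * \<delta> * \<epsilon> k k \<le> 1/2 * \<epsilon> k k" using K2d ekk by (intro mult_right_mono) auto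
        thus ?thesis using qS Re1 S0 SK by (simp add: abs_le_iff)
      qed
      have q2: "\<bar>q - 1\<bar> \<le> 1/2" using q1 ekk by simp
      have qpos: "q > 0" using q2 unfolding abs_le_iff by linarith
      have isq: "\<bar>1 / sqrt q - 1\<bar> \<le> 2 * \<epsilon> k k" using inv_sqrt_bound[OF q2] q1 by simp
      have isq2: "1 / sqrt q \<le> 1 + 2*\<eta>" proof -
        have "\<epsilon> k k \<le> \<eta>" using diag kI by blast
        thus ?thesis using isq unfolding abs_le_iff by linarith
      qed
      define s where "s = complex_of_real (sqrt q)"
      have s0: "s \<noteq> 0" using qpos by (simp add: s_def)
      have cs: "cnj s = s" by (simp add: s_def)
      have ss: "s * s = complex_of_real q" using qpos by (simp add: s_def flip: of_real_mult)
      define T' where "T' = (\<lambda>m j. if j = k then c m / s else T m j)"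
      have colk: "(\<lambda>m. T' m k) = (\<lambda>m. c m / s)" by (simp add: T'_def)
      have colB: "\<And>j. j \<in> B \<Longrightarrow> (\<lambda>m. T' m j) = (\<lambda>m. T m j)" using kB by (auto simp: T'_def)
      have cmb: "\<forall>m\<in>I. r m < n \<longrightarrow> cmod (c m) \<le> K^2 * \<epsilon> m k"
      proof (intro ballI impI)
        fix m assume m: "m \<in> I" and rm: "r m < n"
        have mk: "m \<noteq> k" using rm rk by auto
        have "cmod (c m) = cmod (\<Sum>l\<in>B. a l * T m l)" using mk by (simp add: c_def e_def)
        also have "\<dots> \<le> (\<Sum>l\<in>B. cmod (a l) * cmod (T m l))"
          by (rule order_trans[OF norm_sum]) (simp add: norm_mult)
        also have "\<dots> \<le> (\<Sum>l\<in>B. (K * \<epsilon> l k) * ((if m = l then 1 + 2*\<eta> else 0) + 4 * \<epsilon> m l))"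
          by (rule sum_mono, rule mult_mono) (use a_bound colb m K1 epos d0 in auto)
        also have "\<dots> \<le> (\<Sum>l\<in>I. (K * \<epsilon> l k) * ((if m = l then 1 + 2*\<eta> else 0) + 4 * \<epsilon> m l))"
          by (rule sum_mono2[OF fin BI]) (use K1 epos d0 in auto)
        also have "\<dots> = (K * \<epsilon> m k) * (1 + 2*\<eta>) + (\<Sum>l\<in>I. (K * \<epsilon> l k) * (4 * \<epsilon> m l))"
          by (rule delta_sum2[OF fin m])
        also have "(\<Sum>l\<in>I. (K * \<epsilon> l k) * (4 * \<epsilon> m l)) = (\<Sum>l\<in>I. (4 * K) * (\<epsilon> l m * \<epsilon> l k))"
          by (rule sum.cong[OF refl]) (simp add: esym[rule_format, of m])
        also have "(K * \<epsilon> m k) * (1 + 2*\<eta>) + (\<Sum>l\<in>I. (4 * K) * (\<epsilon> l m * \<epsilon> l k)) = K * ((1 + 2*\<eta>) * \<epsilon> m k + 4 * (\<Sum>l\<in>I. \<epsilon> l m * \<epsilon> l k))"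
          by (simp add: sum_distrib_left algebra_simps)
        also have "\<dots> \<le> K * ((1 + 2*\<eta>) * \<epsilon> m k + 4 * (\<delta> * \<epsilon> m k))"
          using conv m kI K1 by (intro mult_left_mono add_left_mono) auto
        also have "\<dots> = K^2 * \<epsilon> m k" by (simp add: K_def power2_eq_square algebra_simps)
        finally show "cmod (c m) \<le> K^2 * \<epsilon> m k" .
      qed
      have goodk: "good T' k"
        unfolding good_def
      proof (intro conjI ballI impI)
        fix m assume m: "m \<in> I" and "T' m k \<noteq> 0"
        hence "c m \<noteq> 0" by (simp add: T'_def)
        thus "m = k \<or> r m < r k" using c_supp m rk by blast
      next
        have "T' k k = complex_of_real (1 / sqrt q)" by (simp add: T'_def ck s_def)
        hence "cmod (T' k k - 1) = \<bar>1 / sqrt q - 1\<bar>"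
          by (metis norm_of_real of_real_1 of_real_diff)
        thus "cmod (T' k k - 1) \<le> 2 * \<epsilon> k k" using isq by simp
      next
        fix m assume m: "m \<in> I" and rm: "r m < r k"
        have "cmod (T' m k) = cmod (c m) * (1 / sqrt q)"
          using qpos by (simp add: T'_def s_def norm_divide)
        also have "\<dots> \<le> (K^2 * \<epsilon> m k) * (1 + 2*\<eta>)"
          using cmb m rm rk isq2 qpos epos by (intro mult_mono) auto
        also have "\<dots> \<le> 4 * \<epsilon> m k"
        proof -
          have "K^2 * (1 + 2*\<eta>) \<le> (8/5)^2 * (6/5)"
            using K1 K2 d0 by (intro mult_mono power_mono) auto
          also have "(8/5)^2 * (6/5) \<le> (4::real)" by (simp add: power2_eq_square)
          finally have "K^2 * (1 + 2*\<eta>) \<le> 4" .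
          hence "(K^2 * (1 + 2*\<eta>)) * \<epsilon> m k \<le> 4 * \<epsilon> m k" using epos by (intro mult_right_mono) auto
          thus ?thesis by (simp add: algebra_simps)
        qed
        finally show "cmod (T' m k) \<le> 4 * \<epsilon> m k" .
      qed
      have goodB': "\<forall>j\<in>B. good T' j"
      proof
        fix j assume j: "j \<in> B"
        have "j \<noteq> k" using j kB by auto
        thus "good T' j" using goodB j by (simp add: good_def T'_def)
      qed
      have orth': "Qf I G (\<lambda>m. T' m l) (\<lambda>m. T' m j) = (if l = j then 1 else 0)"
        if l: "l \<in> B \<or> l = k" and j: "j \<in> B \<or> j = k" for l j
      proof -
        consider "l \<in> B" "j \<in> B" | "l \<in> B" "j = k" | "l = k" "j \<in> B" | "l = k" "j = k" using l j by blast
        thus ?thesis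
        proof cases
          case 1 thus ?thesis using orthB colB by simp
        next
          case 2 thus ?thesis using orth_c colB colk kB Qf_div_right[of I G "\<lambda>m. T m l" c s] by auto
        next
          case 3
          have "Qf I G c (\<lambda>m. T m j) = cnj (Qf I G (\<lambda>m. T m j) c)" by (rule Qf_herm[OF herm])
          hence "Qf I G c (\<lambda>m. T m j) = 0" using orth_c 3 by simp
          thus ?thesis using 3 colB colk kB Qf_div_left[of I G c s "\<lambda>m. T m j"] by auto
        next
          case 4
          have "Qf I G (\<lambda>m. c m / s) (\<lambda>m. c m / s) = Qf I G c c / s / cnj s"
            by (simp add: Qf_div_left Qf_div_right)
          also have "\<dots> = 1" using Qcq ss cs s0 qpos by (simp add: field_simps)
          finally show ?thesis using 4 colk by simp
        qed
      qed
      show ?thesis unfolding P_def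
      proof (rule exI[of _ T'], intro conjI ballI impI)
        fix j assume "j \<in> I" "r j < Suc n"
        thus "good T' j" using rSuc goodk goodB' by blast
      next
        fix j l assume "j \<in> I" "l \<in> I" "r j < Suc n" "r l < Suc n"
        thus "Qf I G (\<lambda>m. T' m l) (\<lambda>m. T' m j) = (if l = j then 1 else 0)" using rSuc orth' by blast
      qed
    qed
  qed
  from this[of "Suc (\<Sum>k\<in>I. r k)"] obtain T where
    T1: "\<forall>k\<in>I. r k < Suc (\<Sum>k\<in>I. r k) \<longrightarrow> good T k"
    and T2: "\<forall>k\<in>I. \<forall>l\<in>I. r k < Suc (\<Sum>k\<in>I. r k) \<longrightarrow> r l < Suc (\<Sum>k\<in>I. r k) \<longrightarrow> Qf I G (\<lambda>m. T m l) (\<lambda>m. T m k) = (if l = k then 1 else 0)"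
    unfolding P_def by blast
  have rl: "\<forall>k\<in>I. r k < Suc (\<Sum>k\<in>I. r k)" using fin by (simp add: le_imp_less_Suc member_le_sum)
  show ?thesis
    by (rule exI[of _ T]) (use T1 T2 rl in \<open>auto simp: good_def\<close>)
qed




lemma sum_reindex_I:
  fixes N :: nat
  shows "(\<Sum>t<2*N+1. f (int t - int N)) = (\<Sum>x\<in>{-int N..int N}. f x)"
proof -
  have b: "bij_betw (\<lambda>t. int t - int N) {..<2*N+1} {-int N..int N}"
  proof (rule bij_betwI[where g="\<lambda>x. nat (x + int N)"])
    show "(\<lambda>t. int t - int N) \<in> {..<2*N+1} \<rightarrow> {-int N..int N}" by auto
    show "(\<lambda>x. nat (x + int N)) \<in> {-int N..int N} \<rightarrow> {..<2*N+1}" by auto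
  qed auto
  show ?thesis using sum.reindex_bij_betw[OF b, of f] by simp
qed

lemma square_rows:
  fixes U :: "int \<Rightarrow> int \<Rightarrow> complex" and N :: nat
  defines "I \<equiv> {-int N..int N}"
  assumes cols: "\<forall>k\<in>I. \<forall>l\<in>I. (\<Sum>j\<in>I. cnj (U j l) * U j k) = (if l = k then 1 else 0)"
  shows "\<forall>j\<in>I. \<forall>l\<in>I. (\<Sum>k\<in>I. U j k * cnj (U l k)) = (if j = l then 1 else 0)"
proof -
  define n where "n = 2*N+1"
  define A where "A = mat n n (\<lambda>(i,j). cnj (U (int j - int N) (int i - int N)))"
  define B where "B = mat n n (\<lambda>(i,j). U (int i - int N) (int j - int N))"
  have A: "A \<in> carrier_mat n n" and B: "B \<in> carrier_mat n n" by (auto simp: A_def B_def)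
  have AB: "A * B = 1\<^sub>m n"
  proof (rule eq_matI)
    fix i j assume i: "i < dim_row (1\<^sub>m n)" and j: "j < dim_col (1\<^sub>m n)"
    have "(A * B) $$ (i, j) = (\<Sum>t<n. cnj (U (int t - int N) (int i - int N)) * U (int t - int N) (int j - int N))"
      using i j by (simp add: A_def B_def scalar_prod_def atLeast0LessThan)
    also have "\<dots> = (\<Sum>x\<in>I. cnj (U x (int i - int N)) * U x (int j - int N))"
      unfolding n_def I_def by (rule sum_reindex_I)
    also have "\<dots> = (if int i - int N = int j - int N then 1 else 0)"
      using cols i j by (simp add: I_def n_def)
    also have "\<dots> = 1\<^sub>m n $$ (i, j)" using i j by simp
    finally show "(A * B) $$ (i, j) = 1\<^sub>m n $$ (i, j)" .
  qed (auto simp: A_def B_def)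
  have BA: "B * A = 1\<^sub>m n" by (rule mat_mult_left_right_inverse[OF A B AB])
  show ?thesis
  proof (intro ballI)
    fix j l assume j: "j \<in> I" and l: "l \<in> I"
    define i1 where "i1 = nat (j + int N)"
    define i2 where "i2 = nat (l + int N)"
    have i1: "i1 < n" "int i1 - int N = j" using j by (auto simp: i1_def n_def I_def)
    have i2: "i2 < n" "int i2 - int N = l" using l by (auto simp: i2_def n_def I_def)
    have "(B * A) $$ (i1, i2) = (\<Sum>t<n. U j (int t - int N) * cnj (U l (int t - int N)))"
      using i1 i2 by (simp add: A_def B_def scalar_prod_def atLeast0LessThan)
    also have "\<dots> = (\<Sum>k\<in>I. U j k * cnj (U l k))"
      unfolding n_def I_def by (rule sum_reindex_I)
    finally have "(\<Sum>k\<in>I. U j k * cnj (U l k)) = 1\<^sub>m n $$ (i1, i2)" using BA by simp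
    also have "\<dots> = (if j = l then 1 else 0)" using i1 i2 by auto
    finally show "(\<Sum>k\<in>I. U j k * cnj (U l k)) = (if j = l then 1 else 0)" .
  qed
qed



lemma NN_off:
  fixes NN :: "int \<Rightarrow> int \<Rightarrow> complex" and h \<alpha> \<beta> c :: real and v :: "int \<Rightarrow> real \<Rightarrow> complex"
  assumes hyp: "\<forall>j k::int.
      cmod (NN j k
            - (if j = k then exp (2 * pi * of_int k ^ 2 / (\<i> * h)) else 0)
            - (if -j = k then exp (2 * pi * of_int k ^ 2 / (\<i> * h)) / (\<i> * h)
                             * integral {0..2*pi} (v (-2*k)) else 0))
      \<le> c * exp (-\<beta> * \<bar>j-k\<bar>) / (angle j * angle k * angle (j-k) powr (\<alpha> - 1))"
    and "j \<noteq> k" "-j \<noteq> k"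
  shows "cmod (NN j k) \<le> c * exp (-\<beta> * \<bar>j-k\<bar>) / (angle j * angle k * angle (j-k) powr (\<alpha> - 1))"
  using hyp[rule_format, of j k] assms(2,3) by simp

lemma tail_bound:
  fixes NN :: "int \<Rightarrow> int \<Rightarrow> complex" and h \<alpha> \<beta> c cst :: real and v :: "int \<Rightarrow> real \<Rightarrow> complex"
    and N :: nat and l k :: int
  assumes "\<alpha> > 2" "\<beta> \<ge> 0" "c > 0" and cc: "conv_const (\<alpha> - 1) cst" and un: "unitary_l2Z NN"
    and hyp: "\<forall>j k::int.
      cmod (NN j k
            - (if j = k then exp (2 * pi * of_int k ^ 2 / (\<i> * h)) else 0)
            - (if -j = k then exp (2 * pi * of_int k ^ 2 / (\<i> * h)) / (\<i> * h)
                             * integral {0..2*pi} (v (-2*k)) else 0))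
      \<le> c * exp (-\<beta> * \<bar>j-k\<bar>) / (angle j * angle k * angle (j-k) powr (\<alpha> - 1))"
    and lI: "l \<in> {-int N..int N}" and kI: "k \<in> {-int N..int N}"
  shows "cmod ((\<Sum>j\<in>{-int N..int N}. cnj (NN j l) * NN j k) - (if l = k then 1 else 0))
     \<le> c^2 * cst * exp (-\<beta> * \<bar>l-k\<bar>) / (angle l * angle k * (real N + 1)^2 * angle (l-k) powr (\<alpha> - 1))"
proof -
  define I where "I = {-int N..int N}"
  define a where "a = \<alpha> - 1"
  have a1: "a > 1" using assms by (simp add: a_def)
  define E where "E = exp (-\<beta> * \<bar>l-k\<bar>)"
  have E0: "E > 0" by (simp add: E_def)
  define f where "f j = cnj (NN j l) * NN j k" for j
  define h where "h j = 1 / (angle (l-j) powr a * angle (j-k) powr a)" for j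
  define K0 where "K0 = c^2 * E / (angle l * angle k * (real N + 1)^2)"
  have K00: "K0 \<ge> 0" using angle_pos[of l] angle_pos[of k] E0 by (simp add: K0_def)
  have h0: "h j \<ge> 0" for j using angle_pos[of "l-j"] angle_pos[of "j-k"] by (simp add: h_def)
  have hs: "(f has_sum (if l = k then 1 else 0)) UNIV"
    using un unfolding unitary_l2Z_def f_def by blast
  have hI: "(f has_sum (\<Sum>j\<in>I. f j)) I" by (simp add: I_def)
  have hD: "(f has_sum ((if l = k then 1 else 0) - (\<Sum>j\<in>I. f j))) (UNIV - I)"
    by (rule has_sum_Diff[OF hs hI]) simp
  have hsum: "h summable_on UNIV" unfolding h_def using conv_summable[OF a1 order_refl, of l k] by simp
  have hb: "infsum h UNIV \<le> cst / angle (l-k) powr a"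
  proof -
    have "\<forall>\<beta>::int\<ge>0. \<forall>s m::int.
        (\<Sum>\<^sub>\<infinity>k::int. exp (real_of_int (-\<beta> * \<bar>s-k\<bar> - \<beta> * \<bar>k-m\<bar>)) /
             (angle (s-k) powr a * angle (k-m) powr a))
        \<le> cst * exp (real_of_int (-\<beta> * \<bar>s-m\<bar>)) / angle (s-m) powr a" using cc unfolding conv_const_def a_def .
    from this[rule_format, of 0 l k] show ?thesis unfolding h_def by simp
  qed
  have Ksum: "(\<lambda>j. K0 * h j) summable_on UNIV" using hsum by (rule summable_on_cmult_right)
  have KsumD: "(\<lambda>j. K0 * h j) summable_on (UNIV - I)" using Ksum by (rule summable_on_subset_banach) simp
  have fb: "cmod (f j) \<le> K0 * h j" if j: "j \<in> UNIV - I" for j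
  proof -
    have jN: "\<bar>j\<bar> > int N" using j by (auto simp: I_def)
    have lN: "\<bar>l\<bar> \<le> int N" and kN: "\<bar>k\<bar> \<le> int N" using lI kI by auto
    have b1: "cmod (NN j l) \<le> c * exp (-\<beta> * \<bar>j-l\<bar>) / (angle j * angle l * angle (j-l) powr (\<alpha> - 1))"
    proof -
      have "j \<noteq> l" "-j \<noteq> l" using jN lN by auto
      thus ?thesis using hyp[rule_format, of j l] by simp
    qed
    have b2: "cmod (NN j k) \<le> c * exp (-\<beta> * \<bar>j-k\<bar>) / (angle j * angle k * angle (j-k) powr (\<alpha> - 1))"
    proof -
      have "j \<noteq> k" "-j \<noteq> k" using jN kN by auto
      thus ?thesis using hyp[rule_format, of j k] by simp
    qed
    define e1 where "e1 = exp (-\<beta> * \<bar>j-l\<bar>)"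
    define e2 where "e2 = exp (-\<beta> * \<bar>j-k\<bar>)"
    define P1 where "P1 = angle (j-l) powr a"
    define P2 where "P2 = angle (j-k) powr a"
    define X where "X = angle l * angle k * P1 * P2"
    have X0: "X > 0" using angle_pos[of l] angle_pos[of k] angle_pos[of "j-l"] angle_pos[of "j-k"] by (simp add: X_def P1_def P2_def)
    have aj: "angle j \<ge> real N + 1" using jN by (simp add: angle_def)
    have e12: "e1 * e2 \<le> E"
    proof -
      have t: "\<bar>real_of_int l - real_of_int k\<bar> \<le> \<bar>real_of_int j - real_of_int l\<bar> + \<bar>real_of_int j - real_of_int k\<bar>" by linarith
      have "\<beta> * \<bar>real_of_int l - real_of_int k\<bar> \<le> \<beta> * (\<bar>real_of_int j - real_of_int l\<bar> + \<bar>real_of_int j - real_of_int k\<bar>)"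
        using t assms(2) by (rule mult_left_mono)
      hence "- (\<beta> * \<bar>real_of_int j - real_of_int l\<bar>) + - (\<beta> * \<bar>real_of_int j - real_of_int k\<bar>) \<le> - (\<beta> * \<bar>real_of_int l - real_of_int k\<bar>)"
        by (simp add: algebra_simps)
      hence "exp (- (\<beta> * \<bar>real_of_int j - real_of_int l\<bar>) + - (\<beta> * \<bar>real_of_int j - real_of_int k\<bar>)) \<le> exp (- (\<beta> * \<bar>real_of_int l - real_of_int k\<bar>))"
        by (simp only: exp_le_cancel_iff)
      moreover have "e1 * e2 = exp (- (\<beta> * \<bar>real_of_int j - real_of_int l\<bar>) + - (\<beta> * \<bar>real_of_int j - real_of_int k\<bar>))"
      proof -
        have "e1 = exp (- (\<beta> * \<bar>real_of_int j - real_of_int l\<bar>))" "e2 = exp (- (\<beta> * \<bar>real_of_int j - real_of_int k\<bar>))"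
          by (simp_all add: e1_def e2_def)
        thus ?thesis by (simp only: exp_add)
      qed
      moreover have "E = exp (- (\<beta> * \<bar>real_of_int l - real_of_int k\<bar>))" by (simp add: E_def)
      ultimately show ?thesis by (simp only:)
    qed
    have "cmod (f j) \<le> (c * e1 / (angle j * angle l * P1)) * (c * e2 / (angle j * angle k * P2))"
      unfolding f_def norm_mult complex_mod_cnj using b1 b2 assms(3) angle_pos[of j] angle_pos[of l] angle_pos[of "j-l"]
      by (intro mult_mono) (auto simp: e1_def e2_def P1_def P2_def a_def)
    also have "\<dots> = (c * c * (e1 * e2)) / ((angle j * angle j) * X)"
      by (simp add: X_def mult_ac)
    also have "\<dots> \<le> (c * c * E) / (((real N + 1) * (real N + 1)) * X)"
    proof (rule frac_le)
      show "(real N + 1) * (real N + 1) * X \<le> angle j * angle j * X"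
        using aj X0 by (intro mult_right_mono mult_mono) auto
      show "c * c * (e1 * e2) \<le> c * c * E" using e12 by (intro mult_left_mono) auto
      show "0 \<le> c * c * E" using E0 by simp
      show "0 < (real N + 1) * (real N + 1) * X" using X0 by simp
    qed
    also have "\<dots> = K0 * h j"
    proof -
      have "angle (j-l) = angle (l-j)" by (simp add: angle_def abs_minus_commute)
      thus ?thesis
        by (simp add: K0_def h_def X_def P1_def P2_def power2_eq_square)
    qed
    finally show ?thesis .
  qed
  have nsum: "(\<lambda>j. norm (f j)) summable_on (UNIV - I)"
    by (rule summable_on_comparison_test[OF KsumD]) (use fb in auto)
  have "cmod ((\<Sum>j\<in>I. f j) - (if l = k then 1 else 0)) = norm (infsum f (UNIV - I))"
    using infsumI[OF hD] by (simp add: norm_minus_commute)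
  also have "\<dots> \<le> infsum (\<lambda>j. norm (f j)) (UNIV - I)"
    by (rule norm_infsum_bound) (use nsum in simp)
  also have "\<dots> \<le> infsum (\<lambda>j. K0 * h j) (UNIV - I)"
    by (rule infsum_mono[OF nsum KsumD]) (use fb in auto)
  also have "\<dots> \<le> infsum (\<lambda>j. K0 * h j) UNIV"
    by (rule infsum_mono_neutral[OF KsumD Ksum]) (use K00 h0 in auto)
  also have "\<dots> = K0 * infsum h UNIV" by (rule infsum_cmult_right') 
  also have "\<dots> \<le> K0 * (cst / angle (l-k) powr a)"
    using hb K00 by (rule mult_left_mono)
  also have "\<dots> = c^2 * cst * exp (-\<beta> * \<bar>l-k\<bar>) / (angle l * angle k * (real N + 1)^2 * angle (l-k) powr (\<alpha> - 1))"
    by (simp add: K0_def a_def E_def)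
  finally show ?thesis by (simp add: f_def I_def)
qed




definition rk :: "int \<Rightarrow> nat" where
  "rk k = (if k \<ge> 0 then 2 * nat k else 2 * nat (-k) - 1)"

lemma rk_int: "int (rk k) = (if k \<ge> 0 then 2 * k else -2 * k - 1)"
  unfolding rk_def by (cases "k \<ge> 0") (auto simp: of_nat_diff)

lemma rk_inj: "inj rk"
proof (rule injI)
  fix x y assume "rk x = rk y"
  hence "int (rk x) = int (rk y)" by simp
  hence "(if x \<ge> 0 then 2 * x else -2 * x - 1) = (if y \<ge> 0 then 2 * y else -2 * y - 1)" by (simp only: rk_int)
  thus "x = y" by (cases "x \<ge> 0"; cases "y \<ge> 0") presburger+
qed

lemma rk_lt: "rk m < rk k \<longleftrightarrow> (-\<bar>k\<bar> \<le> m \<and> m < \<bar>k\<bar> \<and> m \<noteq> k)"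
proof -
  have "rk m < rk k \<longleftrightarrow> int (rk m) < int (rk k)" by simp
  also have "\<dots> \<longleftrightarrow> (if m \<ge> 0 then 2 * m else -2 * m - 1) < (if k \<ge> 0 then 2 * k else -2 * k - 1)" by (simp only: rk_int)
  also have "\<dots> \<longleftrightarrow> (-\<bar>k\<bar> \<le> m \<and> m < \<bar>k\<bar> \<and> m \<noteq> k)"
    by (cases "m \<ge> 0"; cases "k \<ge> 0"; simp add: abs_if; presburger)
  finally show ?thesis .
qed

lemma eps_prod:
  fixes K D \<beta> a :: real and m l k :: int
  assumes "K \<ge> 0" "D > 0" "\<beta> \<ge> 0" "a > 0"
  defines "\<epsilon> \<equiv> (\<lambda>j k::int. K * exp (-\<beta> * \<bar>j-k\<bar>) / (angle j * angle k * D * angle (j-k) powr a))"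
  shows "\<epsilon> m l * \<epsilon> m k \<le> (K / D) * \<epsilon> l k"
proof -
  define e1 where "e1 = exp (-\<beta> * \<bar>m-l\<bar>)"
  define e2 where "e2 = exp (-\<beta> * \<bar>m-k\<bar>)"
  define E where "E = exp (-\<beta> * \<bar>l-k\<bar>)"
  define P1 where "P1 = angle (m-l) powr a"
  define P2 where "P2 = angle (m-k) powr a"
  define P where "P = angle (l-k) powr a"
  have e12: "e1 * e2 \<le> E"
  proof -
    have t: "\<bar>real_of_int l - real_of_int k\<bar> \<le> \<bar>real_of_int m - real_of_int l\<bar> + \<bar>real_of_int m - real_of_int k\<bar>" by linarith
    have "\<beta> * \<bar>real_of_int l - real_of_int k\<bar> \<le> \<beta> * (\<bar>real_of_int m - real_of_int l\<bar> + \<bar>real_of_int m - real_of_int k\<bar>)"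
      using t assms(3) by (rule mult_left_mono)
    hence "- (\<beta> * \<bar>real_of_int m - real_of_int l\<bar>) + - (\<beta> * \<bar>real_of_int m - real_of_int k\<bar>) \<le> - (\<beta> * \<bar>real_of_int l - real_of_int k\<bar>)"
      by (simp add: algebra_simps)
    hence "exp (- (\<beta> * \<bar>real_of_int m - real_of_int l\<bar>) + - (\<beta> * \<bar>real_of_int m - real_of_int k\<bar>)) \<le> exp (- (\<beta> * \<bar>real_of_int l - real_of_int k\<bar>))"
      by (simp only: exp_le_cancel_iff)
    moreover have "e1 * e2 = exp (- (\<beta> * \<bar>real_of_int m - real_of_int l\<bar>) + - (\<beta> * \<bar>real_of_int m - real_of_int k\<bar>))"
    proof -
      have "e1 = exp (- (\<beta> * \<bar>real_of_int m - real_of_int l\<bar>))" "e2 = exp (- (\<beta> * \<bar>real_of_int m - real_of_int k\<bar>))"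
        by (simp_all add: e1_def e2_def)
      thus ?thesis by (simp only: exp_add)
    qed
    moreover have "E = exp (- (\<beta> * \<bar>real_of_int l - real_of_int k\<bar>))" by (simp add: E_def)
    ultimately show ?thesis by (simp only:)
  qed
  have PP: "P \<le> P1 * P2"
  proof -
    have "angle (l-k) \<le> angle (m-l) * angle (m-k)"
    proof -
      have h1: "angle (l-k) \<le> angle (m-l) + angle (m-k) - 1" by (simp add: angle_def)
      have h2: "0 \<le> (angle (m-l) - 1) * (angle (m-k) - 1)"
        using angle_ge1[of "m-l"] angle_ge1[of "m-k"] by (intro mult_nonneg_nonneg) auto
      have h3: "(angle (m-l) - 1) * (angle (m-k) - 1) = angle (m-l) * angle (m-k) - angle (m-l) - angle (m-k) + 1"
        by (simp add: algebra_simps)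
      show ?thesis using h1 h2 h3 by linarith
    qed
    hence "angle (l-k) powr a \<le> (angle (m-l) * angle (m-k)) powr a"
      using assms(4) angle_pos[of "l-k"] by (intro powr_mono2) auto
    thus ?thesis using angle_pos[of "m-l"] angle_pos[of "m-k"] by (simp add: P_def P1_def P2_def powr_mult)
  qed
  have pos: "angle m > 0" "angle l > 0" "angle k > 0" "P > 0" "P1 > 0" "P2 > 0"
    using angle_pos[of m] angle_pos[of l] angle_pos[of k] angle_pos[of "l-k"] angle_pos[of "m-l"] angle_pos[of "m-k"]
    by (auto simp: P_def P1_def P2_def)
  have am: "angle m * angle m \<ge> 1"
  proof -
    have "1 * 1 \<le> angle m * angle m" using angle_ge1[of m] by (intro mult_mono) auto
    thus ?thesis by simp
  qed
  have "\<epsilon> m l * \<epsilon> m k = (K * e1 * (K * e2)) / ((angle m * angle l * D * P1) * (angle m * angle k * D * P2))"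
    unfolding \<epsilon>_def e1_def e2_def P1_def P2_def by (rule times_divide_times_eq)
  also have "\<dots> \<le> (K * (K * E)) / (D * (angle l * angle k * D * P))"
  proof (rule frac_le)
    have "K * e1 * (K * e2) = (K * K) * (e1 * e2)" by (simp only: mult_ac)
    also have "\<dots> \<le> (K * K) * E" using e12 assms(1) by (intro mult_left_mono) auto
    also have "\<dots> = K * (K * E)" by (simp only: mult_ac)
    finally show "K * e1 * (K * e2) \<le> K * (K * E)" .
    show "0 \<le> K * (K * E)" using assms(1) by (simp add: E_def)
    show "0 < D * (angle l * angle k * D * P)" using pos assms(2) by simp
    have "D * (angle l * angle k * D * P) = (D * D * (angle l * angle k)) * (1 * P)" by (simp only: mult_ac mult_1)
    also have "\<dots> \<le> (D * D * (angle l * angle k)) * ((angle m * angle m) * (P1 * P2))"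
      using pos assms(2) am PP by (intro mult_left_mono mult_mono) auto
    also have "\<dots> = (angle m * angle l * D * P1) * (angle m * angle k * D * P2)" by (simp only: mult_ac)
    finally show "D * (angle l * angle k * D * P) \<le> (angle m * angle l * D * P1) * (angle m * angle k * D * P2)" .
  qed
  also have "\<dots> = (K / D) * \<epsilon> l k"
    unfolding \<epsilon>_def E_def P_def by (rule times_divide_times_eq[symmetric])
  finally show ?thesis .
qed




lemma UU_Q:
  fixes W T :: "int \<Rightarrow> int \<Rightarrow> complex"
  assumes "finite I"
  shows "(\<Sum>j\<in>I. cnj (\<Sum>m\<in>I. W j m * T m l) * (\<Sum>m'\<in>I. W j m' * T m' k))
       = Qf I (\<lambda>m m'. \<Sum>j\<in>I. cnj (W j m) * W j m') (\<lambda>m. T m l) (\<lambda>m. T m k)"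
proof -
  have "(\<Sum>j\<in>I. cnj (\<Sum>m\<in>I. W j m * T m l) * (\<Sum>m'\<in>I. W j m' * T m' k))
      = (\<Sum>j\<in>I. \<Sum>m\<in>I. \<Sum>m'\<in>I. cnj (T m l) * (cnj (W j m) * W j m') * T m' k)"
    unfolding cnj_sum complex_cnj_mult sum_product by (simp add: mult_ac)
  also have "\<dots> = (\<Sum>m\<in>I. \<Sum>j\<in>I. \<Sum>m'\<in>I. cnj (T m l) * (cnj (W j m) * W j m') * T m' k)"
    by (rule sum.swap)
  also have "\<dots> = (\<Sum>m\<in>I. \<Sum>m'\<in>I. \<Sum>j\<in>I. cnj (T m l) * (cnj (W j m) * W j m') * T m' k)"
    by (rule sum.cong[OF refl], rule sum.swap)
  also have "\<dots> = Qf I (\<lambda>m m'. \<Sum>j\<in>I. cnj (W j m) * W j m') (\<lambda>m. T m l) (\<lambda>m. T m k)"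
    unfolding Qf_def by (simp add: sum_distrib_left sum_distrib_right)
  finally show ?thesis .
qed

theorem mainTheorem11:
  fixes h \<alpha> \<beta> c cst :: real
    and v :: "int \<Rightarrow> real \<Rightarrow> complex"
    and NN :: "int \<Rightarrow> int \<Rightarrow> complex"
  assumes "h > 0" and "\<alpha> > 2" and "\<beta> \<ge> 0" and "c > 0"
    and "potential_setting v"
    and "conv_const (\<alpha> - 1) cst"
    and "unitary_l2Z NN"
    and "\<forall>j k::int.
      cmod (NN j k
            - (if j = k then exp (2 * pi * of_int k ^ 2 / (\<i> * h)) else 0)
            - (if -j = k then exp (2 * pi * of_int k ^ 2 / (\<i> * h)) / (\<i> * h)
                             * integral {0..2*pi} (v (-2*k)) else 0))
      \<le> c * exp (-\<beta> * \<bar>j-k\<bar>) / (angle j * angle k * angle (j-k) powr (\<alpha> - 1))"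
  shows "\<exists>N0::nat. \<forall>N\<ge>N0.
    (let \<epsilon> = (\<lambda>j k::int. c^2 * cst * exp (-\<beta> * \<bar>j-k\<bar>) /
                  (angle j * angle k * (real N + 1)^2 * angle (j-k) powr (\<alpha> - 1)));
         \<sigma> = (\<lambda>k::int. 4 * (\<Sum>l\<in>{l. \<bar>l\<bar> \<le> \<bar>k\<bar>}. \<epsilon> l k))
     in \<exists>U. unitary_on {-int N..int N} U \<and>
          (\<forall>j\<in>{-int N..int N}. \<forall>k\<in>{-int N..int N}.
             cmod (U j k - NN j k) \<le> \<sigma> k * cmod (NN j k)
               + (\<Sum>l\<in>{l. -\<bar>k\<bar> \<le> l \<and> l < \<bar>k\<bar> \<and> l \<noteq> k}. 4 * \<epsilon> l k * cmod (NN j l))))"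

proof -
  have a1: "\<alpha> - 1 > 1" using assms(2) by simp
  have cst1: "cst \<ge> 1" using cst_pos[OF a1 assms(6)] .
  define N0 where "N0 = nat \<lceil>20 * c^2 * cst\<rceil>"
  show ?thesis unfolding Let_def
  proof (rule exI[of _ N0], intro allI impI)
    fix N :: nat assume N: "N0 \<le> N"
    define \<epsilon> where "\<epsilon> = (\<lambda>j k::int. c^2 * cst * exp (-\<beta> * \<bar>j-k\<bar>) /
                  (angle j * angle k * (real N + 1)^2 * angle (j-k) powr (\<alpha> - 1)))"
    define I where "I = {-int N..int N}"
    define X where "X = c^2 * cst"
    define A where "A = X / (real N + 1)^2"
    define \<delta> where "\<delta> = real (2*N+1) * A"
    define G where "G = (\<lambda>m m'. \<Sum>j\<in>I. cnj (NN j m) * NN j m')"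
    have finI: "finite I" by (simp add: I_def)
    have X0: "X \<ge> 0" using cst1 by (simp add: X_def)
    have NX: "20 * X \<le> real N"
    proof -
      have "20 * X \<le> real (nat \<lceil>20 * c^2 * cst\<rceil>)" unfolding X_def by (metis mult.assoc real_nat_ceiling_ge)
      also have "\<dots> \<le> real N" using N by (simp add: N0_def)
      finally show ?thesis .
    qed
    have Np: "(real N + 1)^2 > 0" by simp
    have A0: "A \<ge> 0" using X0 by (simp add: A_def)
    have Ad: "A \<le> \<delta>"
    proof -
      have "1 * A \<le> real (2*N+1) * A" using A0 by (intro mult_right_mono) auto
      thus ?thesis by (simp add: \<delta>_def)
    qed
    have d0: "0 \<le> \<delta>" using A0 by (simp add: \<delta>_def)
    have d1: "\<delta> \<le> 1/10"
    proof -
      have "real (2*N+1) * X \<le> real (2*N+1) * (real N / 20)" using NX by (intro mult_left_mono) auto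
      also have "\<dots> \<le> (real N + 1)^2 / 10" by (simp add: power2_eq_square field_simps)
      finally have "real (2*N+1) * X \<le> (real N + 1)^2 / 10" .
      hence "real (2*N+1) * X / (real N + 1)^2 \<le> 1/10" using Np by (simp add: divide_le_eq field_simps)
      thus ?thesis by (simp add: \<delta>_def A_def)
    qed
    have A1: "A \<le> 1/10" using Ad d1 by simp
    have epos: "\<forall>l k. \<epsilon> l k \<ge> 0"
    proof (intro allI)
      fix l k
      have "angle l * angle k * (real N + 1)^2 * angle (l-k) powr (\<alpha> - 1) > 0"
        using angle_pos[of l] angle_pos[of k] angle_pos[of "l-k"] by simp
      thus "\<epsilon> l k \<ge> 0" unfolding \<epsilon>_def using cst1 by (intro divide_nonneg_pos mult_nonneg_nonneg) auto
    qed
    have esym: "\<forall>l k. \<epsilon> l k = \<epsilon> k l"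
    proof (intro allI)
      fix l k :: int
      have e1: "angle (l-k) = angle (k-l)" by (simp add: angle_def abs_minus_commute)
      have e2: "\<bar>real_of_int l - real_of_int k\<bar> = \<bar>real_of_int k - real_of_int l\<bar>" by (rule abs_minus_commute)
      show "\<epsilon> l k = \<epsilon> k l" unfolding \<epsilon>_def by (simp add: e1 e2 mult_ac)
    qed
    have diag: "\<forall>k\<in>I. \<epsilon> k k \<le> A"
    proof
      fix k assume "k \<in> I"
      have ak: "angle k * angle k \<ge> 1"
      proof -
        have "1 * 1 \<le> angle k * angle k" using angle_ge1[of k] by (intro mult_mono) auto
        thus ?thesis by simp
      qed
      have "\<epsilon> k k = X / ((angle k * angle k) * (real N + 1)^2)" by (simp add: \<epsilon>_def X_def angle_def)
      also have "\<dots> \<le> X / (1 * (real N + 1)^2)"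
        using ak X0 Np angle_pos[of k] by (intro divide_left_mono mult_right_mono mult_pos_pos) auto
      finally show "\<epsilon> k k \<le> A" by (simp add: A_def)
    qed
    have conv: "\<forall>l\<in>I. \<forall>k\<in>I. (\<Sum>m\<in>I. \<epsilon> m l * \<epsilon> m k) \<le> \<delta> * \<epsilon> l k"
    proof (intro ballI)
      fix l k assume "l \<in> I" "k \<in> I"
      have ep: "\<epsilon> m l * \<epsilon> m k \<le> A * \<epsilon> l k" for m
        using eps_prod[of X "(real N + 1)^2" \<beta> "\<alpha> - 1" m l k] X0 assms(3) a1
        unfolding \<epsilon>_def A_def X_def by simp
      have "(\<Sum>m\<in>I. \<epsilon> m l * \<epsilon> m k) \<le> (\<Sum>m\<in>I. A * \<epsilon> l k)" by (rule sum_mono) (rule ep)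
      also have "\<dots> = real (card I) * (A * \<epsilon> l k)" by simp
      also have "card I = 2*N+1" by (simp add: I_def)
      finally show "(\<Sum>m\<in>I. \<epsilon> m l * \<epsilon> m k) \<le> \<delta> * \<epsilon> l k" by (simp add: \<delta>_def)
    qed
    have Gb: "\<forall>l\<in>I. \<forall>k\<in>I. cmod (G l k - (if l = k then 1 else 0)) \<le> \<epsilon> l k"
    proof (intro ballI)
      fix l k assume l: "l \<in> I" and k: "k \<in> I"
      show "cmod (G l k - (if l = k then 1 else 0)) \<le> \<epsilon> l k"
        using tail_bound[OF assms(2,3,4,6,7,8), of l N k] l k unfolding G_def \<epsilon>_def I_def by simp
    qed
    have herm: "\<forall>m\<in>I. \<forall>m'\<in>I. G m m' = cnj (G m' m)"
      unfolding G_def by (simp add: cnj_sum mult.commute)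
    have injI: "inj_on rk I" using rk_inj by (rule inj_on_subset) simp
    obtain T where T: "\<forall>k\<in>I. (\<forall>m\<in>I. T m k \<noteq> 0 \<longrightarrow> m = k \<or> rk m < rk k) \<and> cmod (T k k - 1) \<le> 2 * \<epsilon> k k
     \<and> (\<forall>m\<in>I. rk m < rk k \<longrightarrow> cmod (T m k) \<le> 4 * \<epsilon> m k)
     \<and> (\<forall>l\<in>I. Qf I G (\<lambda>m. T m l) (\<lambda>m. T m k) = (if l = k then 1 else 0))"
      using gram_schmidt[OF finI injI herm Gb epos esym conv diag d0 d1 A0 A1] by blast
    define U where "U = (\<lambda>j k. \<Sum>m\<in>I. NN j m * T m k)"
    have cols: "\<forall>k\<in>I. \<forall>l\<in>I. (\<Sum>j\<in>I. cnj (U j l) * U j k) = (if l = k then 1 else 0)"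
    proof (intro ballI)
      fix k l assume k: "k \<in> I" and l: "l \<in> I"
      have "(\<Sum>j\<in>I. cnj (U j l) * U j k) = Qf I G (\<lambda>m. T m l) (\<lambda>m. T m k)"
        unfolding U_def G_def by (rule UU_Q[OF finI])
      thus "(\<Sum>j\<in>I. cnj (U j l) * U j k) = (if l = k then 1 else 0)" using T k l by simp
    qed
    have rows: "\<forall>j\<in>I. \<forall>l\<in>I. (\<Sum>k\<in>I. U j k * cnj (U l k)) = (if j = l then 1 else 0)"
      using square_rows[of N U] cols unfolding I_def by blast
    have unit: "unitary_on I U" unfolding unitary_on_def using cols rows by blast
    have bound: "\<forall>j\<in>I. \<forall>k\<in>I. cmod (U j k - NN j k) \<le> 4 * (\<Sum>l\<in>{l. \<bar>l\<bar> \<le> \<bar>k\<bar>}. \<epsilon> l k) * cmod (NN j k)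
               + (\<Sum>l\<in>{l. -\<bar>k\<bar> \<le> l \<and> l < \<bar>k\<bar> \<and> l \<noteq> k}. 4 * \<epsilon> l k * cmod (NN j l))"
    proof (intro ballI)
      fix j k assume j: "j \<in> I" and k: "k \<in> I"
      define Bk where "Bk = {l. -\<bar>k\<bar> \<le> l \<and> l < \<bar>k\<bar> \<and> l \<noteq> k}"
      have BkI: "Bk \<subseteq> I - {k}" using k by (auto simp: Bk_def I_def)
      have Tk: "(\<forall>m\<in>I. T m k \<noteq> 0 \<longrightarrow> m = k \<or> rk m < rk k)" "cmod (T k k - 1) \<le> 2 * \<epsilon> k k"
        "\<forall>m\<in>I. rk m < rk k \<longrightarrow> cmod (T m k) \<le> 4 * \<epsilon> m k" using T k by auto
      have s1: "U j k = NN j k * T k k + (\<Sum>m\<in>I - {k}. NN j m * T m k)"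
        unfolding U_def using sum.remove[OF finI k, of "\<lambda>m. NN j m * T m k"] by simp
      have s2: "(\<Sum>m\<in>I - {k}. NN j m * T m k) = (\<Sum>m\<in>Bk. NN j m * T m k)"
      proof (rule sum.mono_neutral_right[OF _ BkI])
        show "finite (I - {k})" using finI by simp
        show "\<forall>m\<in>I - {k} - Bk. NN j m * T m k = 0"
        proof
          fix m assume m: "m \<in> I - {k} - Bk"
          have "\<not> rk m < rk k" using m unfolding rk_lt Bk_def by blast
          hence "T m k = 0" using Tk(1) m by auto
          thus "NN j m * T m k = 0" by simp
        qed
      qed
      have eqU: "U j k - NN j k = NN j k * (T k k - 1) + (\<Sum>m\<in>Bk. NN j m * T m k)"
        using s1 s2 by (simp add: algebra_simps)
      have "cmod (U j k - NN j k) \<le> cmod (NN j k * (T k k - 1)) + cmod (\<Sum>m\<in>Bk. NN j m * T m k)"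
        unfolding eqU by (rule norm_triangle_ineq)
      also have "\<dots> \<le> cmod (NN j k) * cmod (T k k - 1) + (\<Sum>m\<in>Bk. cmod (NN j m) * cmod (T m k))"
      proof (rule add_mono)
        show "cmod (NN j k * (T k k - 1)) \<le> cmod (NN j k) * cmod (T k k - 1)" by (simp add: norm_mult)
        show "cmod (\<Sum>m\<in>Bk. NN j m * T m k) \<le> (\<Sum>m\<in>Bk. cmod (NN j m) * cmod (T m k))"
          by (rule order_trans[OF norm_sum]) (simp add: norm_mult)
      qed
      also have "\<dots> \<le> cmod (NN j k) * (4 * (\<Sum>l\<in>{l. \<bar>l\<bar> \<le> \<bar>k\<bar>}. \<epsilon> l k)) + (\<Sum>m\<in>Bk. 4 * \<epsilon> m k * cmod (NN j m))"
      proof (rule add_mono)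
        have fin2: "finite {l::int. \<bar>l\<bar> \<le> \<bar>k\<bar>}" by (rule finite_subset[of _ "{-\<bar>k\<bar>..\<bar>k\<bar>}"]) auto
        have "\<epsilon> k k \<le> (\<Sum>l\<in>{l. \<bar>l\<bar> \<le> \<bar>k\<bar>}. \<epsilon> l k)"
          by (rule member_le_sum) (use epos fin2 in auto)
        hence "cmod (T k k - 1) \<le> 4 * (\<Sum>l\<in>{l. \<bar>l\<bar> \<le> \<bar>k\<bar>}. \<epsilon> l k)" using Tk(2) epos[rule_format, of k k] by linarith
        thus "cmod (NN j k) * cmod (T k k - 1) \<le> cmod (NN j k) * (4 * (\<Sum>l\<in>{l. \<bar>l\<bar> \<le> \<bar>k\<bar>}. \<epsilon> l k))"
          by (rule mult_left_mono) simp
        show "(\<Sum>m\<in>Bk. cmod (NN j m) * cmod (T m k)) \<le> (\<Sum>m\<in>Bk. 4 * \<epsilon> m k * cmod (NN j m))"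
        proof (rule sum_mono)
          fix m assume m: "m \<in> Bk"
          have "m \<in> I" "rk m < rk k" using m BkI by (auto simp: rk_lt Bk_def)
          hence "cmod (T m k) \<le> 4 * \<epsilon> m k" using Tk(3) by blast
          thus "cmod (NN j m) * cmod (T m k) \<le> 4 * \<epsilon> m k * cmod (NN j m)"
            by (simp add: mult.commute mult_left_mono)
        qed
      qed
      finally show "cmod (U j k - NN j k) \<le> 4 * (\<Sum>l\<in>{l. \<bar>l\<bar> \<le> \<bar>k\<bar>}. \<epsilon> l k) * cmod (NN j k)
               + (\<Sum>l\<in>{l. -\<bar>k\<bar> \<le> l \<and> l < \<bar>k\<bar> \<and> l \<noteq> k}. 4 * \<epsilon> l k * cmod (NN j l))"
        by (simp add: Bk_def mult.commute)
    qed
    have final: "\<exists>U. unitary_on I U \<and> (\<forall>j\<in>I. \<forall>k\<in>I. cmod (U j k - NN j k) \<le> 4 * (\<Sum>l\<in>{l. \<bar>l\<bar> \<le> \<bar>k\<bar>}. \<epsilon> l k) * cmod (NN j k)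
               + (\<Sum>l\<in>{l. -\<bar>k\<bar> \<le> l \<and> l < \<bar>k\<bar> \<and> l \<noteq> k}. 4 * \<epsilon> l k * cmod (NN j l)))"
      using unit bound by blast
    show "\<exists>U. unitary_on {-int N..int N} U \<and>
          (\<forall>j\<in>{-int N..int N}. \<forall>k\<in>{-int N..int N}.
             cmod (U j k - NN j k) \<le> 4 * (\<Sum>l\<in>{l. \<bar>l\<bar> \<le> \<bar>k\<bar>}. c^2 * cst * exp (-\<beta> * \<bar>l-k\<bar>) /
                  (angle l * angle k * (real N + 1)^2 * angle (l-k) powr (\<alpha> - 1))) * cmod (NN j k)
               + (\<Sum>l\<in>{l. -\<bar>k\<bar> \<le> l \<and> l < \<bar>k\<bar> \<and> l \<noteq> k}. 4 * (c^2 * cst * exp (-\<beta> * \<bar>l-k\<bar>) /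
                  (angle l * angle k * (real N + 1)^2 * angle (l-k) powr (\<alpha> - 1))) * cmod (NN j l)))"
      using final unfolding \<epsilon>_def I_def .
  qed
qed


end
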